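(* Let $p$ be an odd prime, $m\ge3$ odd, $k\ge1$ with $\gcd(m,k)=1$. Fix $v\in\mathbb{F}_{p^m}^*$. As $u$ runs through $\mathbb{F}_{p^m}$, $D(u,v)$ takes only the values $0$, $(p-1)p^{\frac{m+1}{2}}$, $-(p-1)p^{\frac{m+1}{2}}$, and these occur respectively $p^m-p^{m-1}$, $\frac12(p^{m-1}+p^{\frac{m-1}{2}})$, and $\frac12(p^{m-1}-p^{\frac{m-1}{2}})$ times.
   Context: $\mathrm{Tr}$ is the trace from $\mathbb{F}_{p^m}$ to $\mathbb{F}_p$ and $\zeta_p=e^{2\pi i/p}$. For $(u,v)\in\mathbb{F}_{p^m}^2$, $D(u,v)=\sum_{y\in\mathbb{F}_p^*}\sum_{x\in\mathbb{F}_{p^m}}\zeta_p^{y\,\mathrm{Tr}(ux^2+vx^{p^k+1})}$. *)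

theory Defs
  imports "HOL-Analysis.Analysis"
begin

text \<open>The finite field F_{p^m} is modelled by a finite field type 'a with CARD('a) = p^m.
  Absolute trace Tr(x) = x + x^p + ... + x^(p^(m-1)), an element of the prime field.\<close>

definition ftrace :: "nat \<Rightarrow> nat \<Rightarrow> 'a::field \<Rightarrow> 'a" where
  "ftrace p m x = (\<Sum>i<m. x ^ (p ^ i))"

text \<open>Identification of the prime field F_p with {0..p-1}: the unique t < p with of_nat t = Tr(x).\<close>
definition trace_nat :: "nat \<Rightarrow> nat \<Rightarrow> 'a::field \<Rightarrow> nat" where
  "trace_nat p m x = (THE t. t < p \<and> of_nat t = ftrace p m x)"

definition zeta :: "nat \<Rightarrow> complex" where
  "zeta p = exp (2 * of_real pi * \<i> / of_nat p)"

definition Dsum :: "nat \<Rightarrow> nat \<Rightarrow> nat \<Rightarrow> 'a::{field,finite} \<Rightarrow> 'a \<Rightarrow> complex" where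
  "Dsum p m k u v = (\<Sum>y\<in>{1..<p}. \<Sum>x\<in>(UNIV::'a set).
      zeta p ^ (y * trace_nat p m (u * x ^ 2 + v * x ^ (p ^ k + 1))))"

end

theory Submission
  imports Defs "HOL-Number_Theory.Residues" "HOL-Computational_Algebra.Polynomial"
begin


locale ffs =
  fixes p m k :: nat and v :: "'a::{field,finite}"
  assumes p_prime: "prime p" and p_odd: "odd p" and m_odd: "odd m" and m_ge: "m \<ge> 3"
    and k_ge: "k \<ge> 1" and cop: "coprime m k" and card_a: "CARD('a) = p ^ m" and v_nz: "v \<noteq> 0"
begin

lemma p_gt1: "p > 1" using p_prime prime_gt_1_nat by blast
lemma p_ge3: "p \<ge> 3" using p_gt1 p_odd by presburger

lemma CHAR_eq: "CHAR('a) = p"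
proof -
  have "CHAR('a) dvd p ^ m" using CHAR_dvd_CARD[where 'a='a] card_a by metis
  moreover have "prime CHAR('a)"
    by (rule prime_CHAR_semidom) (rule finite_imp_CHAR_pos, simp)
  ultimately have "CHAR('a) dvd p" using prime_dvd_power by blast
  thus ?thesis using \<open>prime CHAR('a)\<close> p_prime primes_dvd_imp_eq by blast
qed

lemma prime_CHAR: "prime CHAR('a)" using CHAR_eq p_prime by simp

lemma ofnat_eq0: "(of_nat n :: 'a) = 0 \<longleftrightarrow> p dvd n"
  by (simp add: of_nat_eq_0_iff_char_dvd CHAR_eq)

lemma ofnat_eq_iff: "(of_nat a :: 'a) = of_nat b \<longleftrightarrow> [a = b] (mod p)"
  using of_nat_eq_iff_cong_CHAR[where 'a='a] CHAR_eq by simp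

lemma ofnat_mod: "(of_nat (n mod p) :: 'a) = of_nat n"
  by (simp add: ofnat_eq_iff cong_def)

lemma frob: "((x::'a) + y) ^ (p ^ j) = x ^ (p ^ j) + y ^ (p ^ j)"
  using freshmans_dream'[OF prime_CHAR, of "p^j" j x y] CHAR_eq by simp

lemma frob_sum: "(sum (f :: 'b \<Rightarrow> 'a) A) ^ (p ^ j) = sum (\<lambda>i. f i ^ (p ^ j)) A"
  using freshmans_dream_sum'[OF prime_CHAR, of "p^j" j f A] CHAR_eq by simp

lemma frob_neg: "(- (x::'a)) ^ (p ^ j) = - (x ^ (p ^ j))"
proof -
  have "odd (p ^ j)" using p_odd by simp
  thus ?thesis by (simp add: power_minus_odd)
qed

lemma frob_diff: "((x::'a) - y) ^ (p ^ j) = x ^ (p ^ j) - y ^ (p ^ j)"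
  using frob[of x "-y" j] frob_neg[of y j] by simp

lemma fermat0: "(x::'a) ^ CARD('a) = x"
proof (cases "x = 0")
  case False
  have "x * (\<Prod>y\<in>UNIV-{0}. x * y) = x * x ^ (card (UNIV :: 'a set) - 1) * \<Prod>(UNIV-{0})"
    by (simp add: prod.distrib mult_ac)
  also have "x * x ^ (card (UNIV :: 'a set) - 1) = x ^ Suc (card (UNIV :: 'a set) - 1)"
    by (subst power_Suc) auto
  also have "Suc (card (UNIV :: 'a set) - 1) = card (UNIV :: 'a set)"
    using finite_UNIV_card_ge_0[where ?'a = 'a] by simp
  also have "(\<Prod>y\<in>UNIV-{0}. x * y) = (\<Prod>y\<in>UNIV-{0}. y)"
    by (rule prod.reindex_bij_witness[of _ "\<lambda>y. y / x" "\<lambda>y. x * y"]) (use False in auto)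
  finally show ?thesis
    by simp
qed (use finite_UNIV_card_ge_0[where ?'a = 'a] in auto)

lemma fermat: "(x::'a) ^ (p ^ m) = x" using fermat0 card_a by simp

lemma pow_swap: "((x::'a) ^ a) ^ b = (x ^ b) ^ a"
  by (metis power_mult mult.commute)

lemma fermat_mult: "(x::'a) ^ (p ^ (m * j)) = x"
proof (induction j)
  case (Suc j)
  have e: "p ^ (m * Suc j) = p ^ (m * j) * p ^ m" by (simp add: power_add)
  have "(x::'a) ^ (p ^ (m * Suc j)) = (x ^ (p ^ (m * j))) ^ (p ^ m)"
    unfolding e by (rule power_mult)
  thus ?case using Suc fermat by simp
qed simp

definition Fp :: "'a set" where "Fp = {c. c ^ p = c}"

lemma ofnat_Fp: "(of_nat j :: 'a) ^ p = of_nat j"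
proof (induction j)
  case 0 then show ?case using p_gt1 by simp
next
  case (Suc j)
  have "(of_nat (Suc j) :: 'a) ^ p = (of_nat j + 1) ^ (p ^ 1)" by (simp add: add.commute)
  also have "\<dots> = of_nat j ^ p + 1" by (subst frob) simp
  finally show ?case using Suc by simp
qed

lemma inj_ofnat: "inj_on (of_nat :: nat \<Rightarrow> 'a) {..<p}"
  by (auto simp: inj_on_def ofnat_eq_iff cong_def)

lemma card_Fp_le: "card Fp \<le> p"
proof -
  define P :: "'a poly" where "P = Polynomial.monom 1 p - [:0, 1:]"
  have ev: "poly P x = x ^ p - x" for x by (simp add: P_def poly_monom)
  have c01: "Polynomial.coeff [:0, 1::'a:] p = 0" using p_gt1
    by (cases p) (auto simp: coeff_pCons split: nat.split)
  have cP: "Polynomial.coeff P p = 1" using c01 by (simp add: P_def coeff_monom)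
  hence "P \<noteq> 0" by auto
  have "degree P \<le> p" unfolding P_def
    by (rule degree_diff_le) (use p_gt1 in \<open>auto simp: degree_monom_eq\<close>)
  have "Fp = {x. poly P x = 0}" by (auto simp: Fp_def ev)
  thus ?thesis using card_poly_roots_bound[OF \<open>P \<noteq> 0\<close>] \<open>degree P \<le> p\<close> by simp
qed

lemma Fp_eq: "Fp = of_nat ` {..<p}"
proof -
  have sub: "of_nat ` {..<p} \<subseteq> Fp" using ofnat_Fp by (auto simp: Fp_def)
  have c: "card (of_nat ` {..<p} :: 'a set) = p" using card_image[OF inj_ofnat] by simp
  have "finite Fp" by simp
  show ?thesis using card_subset_eq[OF \<open>finite Fp\<close> sub] c card_Fp_le
    by (metis card_mono \<open>finite Fp\<close> le_antisym sub)
qed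

lemma card_Fp: "card Fp = p"
  using card_image[OF inj_ofnat] Fp_eq by simp

lemma Fp_iter: "c \<in> Fp \<Longrightarrow> c ^ (p ^ j) = c"
proof (induction j)
  case (Suc j)
  have "c ^ (p ^ Suc j) = (c ^ (p ^ j)) ^ p" by (simp add: power_mult[symmetric] mult.commute)
  thus ?case using Suc by (simp add: Fp_def)
qed simp

lemma Fp_add: "a \<in> Fp \<Longrightarrow> b \<in> Fp \<Longrightarrow> a + b \<in> Fp"
  using frob[of a b 1] by (simp add: Fp_def)
lemma Fp_mult: "a \<in> Fp \<Longrightarrow> b \<in> Fp \<Longrightarrow> a * b \<in> Fp"
  by (simp add: Fp_def power_mult_distrib)
lemma Fp_neg: "a \<in> Fp \<Longrightarrow> - a \<in> Fp"
  using frob_neg[of a 1] by (simp add: Fp_def)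
lemma Fp_inv: "a \<in> Fp \<Longrightarrow> inverse a \<in> Fp"
  by (simp add: Fp_def power_inverse)
lemma Fp_div: "a \<in> Fp \<Longrightarrow> b \<in> Fp \<Longrightarrow> a / b \<in> Fp"
  by (simp add: Fp_def power_divide)
lemma Fp_0: "0 \<in> Fp" and Fp_1: "1 \<in> Fp" using p_gt1 by (auto simp: Fp_def)
lemma Fp_ofnat: "of_nat j \<in> Fp" using ofnat_Fp by (simp add: Fp_def)

lemma tr_shift: "(\<Sum>i<m. (x::'a) ^ (p ^ Suc i)) = ftrace p m x"
proof -
  have "(\<Sum>i<Suc m. x ^ (p ^ i)) = x ^ (p ^ 0) + (\<Sum>i<m. x ^ (p ^ Suc i))"
    by (rule sum.lessThan_Suc_shift)
  moreover have "(\<Sum>i<Suc m. x ^ (p ^ i)) = (\<Sum>i<m. x ^ (p ^ i)) + x ^ (p ^ m)" by simp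
  ultimately show ?thesis using fermat[of x] by (simp add: ftrace_def)
qed

lemma tr_pow: "ftrace p m ((x::'a) ^ p) = ftrace p m x"
proof -
  have "ftrace p m (x ^ p) = (\<Sum>i<m. x ^ (p ^ Suc i))"
    by (simp add: ftrace_def power_mult[symmetric] mult.commute)
  thus ?thesis using tr_shift by simp
qed

lemma tr_pow_iter: "ftrace p m ((x::'a) ^ (p ^ j)) = ftrace p m x"
proof (induction j)
  case (Suc j)
  have "x ^ (p ^ Suc j) = (x ^ (p ^ j)) ^ p" by (simp add: power_mult[symmetric] mult.commute)
  thus ?case using Suc tr_pow by simp
qed simp

lemma tr_Fp: "ftrace p m (x::'a) \<in> Fp"
proof -
  have "(ftrace p m x) ^ p = ftrace p m (x ^ p)"
    using frob_sum[of "\<lambda>i. x ^ (p ^ i)" "{..<m}" 1]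
    by (simp add: ftrace_def power_mult[symmetric] mult.commute)
  thus ?thesis using tr_pow by (simp add: Fp_def)
qed

lemma tr_add: "ftrace p m ((x::'a) + y) = ftrace p m x + ftrace p m y"
  by (simp add: ftrace_def frob sum.distrib)

lemma tr_scal: "c \<in> Fp \<Longrightarrow> ftrace p m (c * (x::'a)) = c * ftrace p m x"
  by (simp add: ftrace_def power_mult_distrib Fp_iter sum_distrib_left)

lemma tr_neg: "ftrace p m (- (x::'a)) = - ftrace p m x"
  by (simp add: ftrace_def frob_neg sum_negf)

lemma tr_diff: "ftrace p m ((x::'a) - y) = ftrace p m x - ftrace p m y"
  using tr_add[of x "-y"] tr_neg[of y] by simp

lemma tr_zero: "ftrace p m (0::'a) = 0"
  using p_gt1 by (simp add: ftrace_def power_0_left)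

lemma tr_nonzero: "\<exists>x::'a. ftrace p m x \<noteq> 0"
proof (rule ccontr)
  assume "\<not> ?thesis"
  hence all0: "\<And>x::'a. ftrace p m x = 0" by blast
  define T :: "'a poly" where "T = (\<Sum>i<m. Polynomial.monom 1 (p ^ i))"
  have ev: "poly T x = ftrace p m x" for x by (simp add: T_def poly_sum poly_monom ftrace_def)
  have inj: "inj (\<lambda>i. p ^ i)" using p_gt1 by (auto simp: inj_on_def)
  have "Polynomial.coeff T (p ^ (m - 1)) = (\<Sum>i<m. if p ^ i = p ^ (m - 1) then 1 else 0)"
    by (simp add: T_def coeff_sum coeff_monom)
  also have "\<dots> = (\<Sum>i\<in>{m - 1}. 1)"
  proof -
    have "(\<Sum>i<m. if p ^ i = p ^ (m - 1) then (1::'a) else 0) = (\<Sum>i<m. if i = m - 1 then 1 else 0)"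
      using inj by (intro sum.cong) (auto simp: inj_eq)
    also have "\<dots> = 1" using m_ge by (simp add: sum.delta)
    finally show ?thesis by simp
  qed
  finally have "Polynomial.coeff T (p ^ (m - 1)) = 1" by simp
  hence "T \<noteq> 0" by auto
  have "degree T \<le> p ^ (m - 1)" unfolding T_def
  proof (rule degree_sum_le)
    fix i assume "i \<in> {..<m}"
    hence "p ^ i \<le> p ^ (m - 1)" using p_gt1 by (intro power_increasing) auto
    thus "degree (Polynomial.monom (1::'a) (p ^ i)) \<le> p ^ (m - 1)" by (simp add: degree_monom_eq)
  qed simp
  have "{x. poly T x = 0} = UNIV" using all0 ev by auto
  hence "p ^ m \<le> p ^ (m - 1)" using card_poly_roots_bound[OF \<open>T \<noteq> 0\<close>] \<open>degree T \<le> _\<close> card_a by simp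
  moreover have "p ^ (m - 1) < p ^ m" using p_gt1 m_ge by (intro power_strict_increasing) auto
  ultimately show False by simp
qed

lemma tn: "trace_nat p m (x::'a) < p \<and> of_nat (trace_nat p m x) = ftrace p m x"
proof -
  obtain t where t: "t < p" "of_nat t = ftrace p m x" using tr_Fp[of x] Fp_eq by auto
  have "\<exists>!t. t < p \<and> (of_nat t :: 'a) = ftrace p m x"
    using t inj_ofnat by (intro ex1I[of _ t]) (auto simp: inj_on_def)
  thus ?thesis unfolding trace_nat_def by (rule theI')
qed

lemma tn_lt: "trace_nat p m (x::'a) < p" using tn by blast
lemma tn_of: "of_nat (trace_nat p m (x::'a)) = ftrace p m x" using tn by blast

lemma tn_unique: "t < p \<Longrightarrow> of_nat t = ftrace p m (x::'a) \<Longrightarrow> trace_nat p m x = t"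
  using tn[of x] inj_ofnat by (auto simp: inj_on_def)

lemma tn_eq: "ftrace p m (x::'a) = ftrace p m y \<Longrightarrow> trace_nat p m x = trace_nat p m y"
  by (metis tn_of tn_lt tn_unique)

lemma tn_add: "trace_nat p m ((x::'a) + y) = (trace_nat p m x + trace_nat p m y) mod p"
  by (rule tn_unique) (use p_gt1 in \<open>simp_all add: ofnat_mod tn_of tr_add\<close>)

lemma tn_scal: "trace_nat p m (of_nat y * (x::'a)) = (y * trace_nat p m x) mod p"
  by (rule tn_unique) (use p_gt1 in \<open>simp_all add: ofnat_mod tn_of tr_scal Fp_ofnat\<close>)

lemma tn_0_iff: "trace_nat p m (x::'a) = 0 \<longleftrightarrow> ftrace p m x = 0"
  by (metis of_nat_0 tn_of tn_unique p_gt1 less_trans zero_less_one)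

end


context ffs begin

lemma zeta_pow: "zeta p ^ n = exp (of_nat n * (2 * of_real pi * \<i> / of_nat p))"
  by (simp only: zeta_def exp_of_nat_mult)

lemma zeta_pow_eq1: "zeta p ^ n = 1 \<longleftrightarrow> p dvd n"
proof -
  have pp: "real p > 0" using p_gt1 by simp
  have "zeta p ^ n = 1 \<longleftrightarrow> (\<exists>j::int. 2 * pi * real n / real p = of_int (2 * j) * pi)"
    unfolding zeta_pow exp_eq_1 by (simp add: mult_ac)
  also have "\<dots> \<longleftrightarrow> (\<exists>j::int. int n = int p * j)"
  proof
    assume "\<exists>j::int. 2 * pi * real n / real p = of_int (2 * j) * pi"
    then obtain j :: int where "2 * pi * real n / real p = of_int (2 * j) * pi" by blast
    hence "2 * pi * real n = 2 * pi * (real p * of_int j)" using pp by (simp add: field_simps)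
    hence "real n = real p * of_int j" using pi_gt_zero by simp
    hence "of_int (int n) = (of_int (int p * j) :: real)" by simp
    thus "\<exists>j::int. int n = int p * j" using of_int_eq_iff by blast
  next
    assume "\<exists>j::int. int n = int p * j"
    then obtain j where "int n = int p * j" by blast
    hence "real n = real p * of_int j" by (metis of_int_mult of_int_of_nat_eq)
    thus "\<exists>j::int. 2 * pi * real n / real p = of_int (2 * j) * pi"
      using pp by (intro exI[of _ j]) (simp add: field_simps)
  qed
  also have "\<dots> \<longleftrightarrow> p dvd n" by (metis dvd_def int_dvd_int_iff)
  finally show ?thesis .
qed

lemma zeta_pow_p: "zeta p ^ p = 1" using zeta_pow_eq1 by simp

lemma zeta_pow_mod: "zeta p ^ (n mod p) = zeta p ^ n"
proof -
  have "zeta p ^ n = zeta p ^ (p * (n div p) + n mod p)" by simp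
  also have "\<dots> = zeta p ^ (n mod p)" by (simp only: power_add power_mult zeta_pow_p) simp
  finally show ?thesis by simp
qed

lemma dvd_lt: "t < p \<Longrightarrow> p dvd t \<longleftrightarrow> t = 0"
  by (auto dest: dvd_imp_le)

definition psi :: "'a \<Rightarrow> complex" where "psi a = zeta p ^ trace_nat p m a"

lemma psi_add: "psi (a + b) = psi a * psi b"
  by (simp add: psi_def tn_add zeta_pow_mod power_add)

lemma tn_0: "trace_nat p m (0::'a) = 0"
  using tn_0_iff tr_zero by blast

lemma psi_0: "psi 0 = 1"
  by (simp add: psi_def tn_0)

lemma psi_tr: "ftrace p m a = ftrace p m b \<Longrightarrow> psi a = psi b"
  unfolding psi_def by (drule tn_eq) simp

lemma psi_scal: "zeta p ^ (y * trace_nat p m a) = psi (of_nat y * a)"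
  by (simp add: psi_def tn_scal zeta_pow_mod)

lemma psi_eq1: "psi a = 1 \<longleftrightarrow> ftrace p m a = 0"
proof -
  have "psi a = 1 \<longleftrightarrow> p dvd trace_nat p m a" by (simp add: psi_def zeta_pow_eq1)
  also have "\<dots> \<longleftrightarrow> trace_nat p m a = 0" using tn_lt[of a] by (rule dvd_lt)
  finally show ?thesis by (simp add: tn_0_iff)
qed

lemma psi_neg: "psi (- a) * psi a = 1"
  using psi_add[of "-a" a] psi_0 by simp

lemma char_sum1: "(\<Sum>x\<in>UNIV. psi x) = 0"
proof -
  obtain x0 :: 'a where x0: "ftrace p m x0 \<noteq> 0" using tr_nonzero by blast
  have "(\<Sum>x\<in>UNIV. psi x) = (\<Sum>x\<in>UNIV. psi (x + x0))"
    by (rule sum.reindex_bij_witness[of _ "\<lambda>y. y + x0" "\<lambda>y. y - x0"]) auto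
  also have "\<dots> = psi x0 * (\<Sum>x\<in>UNIV. psi x)" by (simp add: psi_add sum_distrib_left mult.commute)
  finally have "(1 - psi x0) * (\<Sum>x\<in>UNIV. psi x) = 0" by (simp add: algebra_simps)
  moreover have "psi x0 \<noteq> 1" using x0 psi_eq1 by simp
  ultimately show ?thesis by simp
qed

lemma char_sum: "(\<Sum>x\<in>UNIV. psi (c * x)) = (if c = 0 then of_nat (p ^ m) else 0)"
proof (cases "c = 0")
  case True thus ?thesis by (simp add: psi_0 card_a)
next
  case False
  have "(\<Sum>x\<in>UNIV. psi (c * x)) = (\<Sum>x\<in>UNIV. psi x)"
    by (rule sum.reindex_bij_witness[of _ "\<lambda>y. y / c" "\<lambda>y. c * y"]) (use False in auto)
  thus ?thesis using char_sum1 False by simp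
qed

lemma geo: "(\<Sum>y\<in>{1..<p}. zeta p ^ (y * t)) = (if p dvd t then of_nat p - 1 else - 1)"
proof -
  have s: "(\<Sum>y\<in>{1..<p}. zeta p ^ (y * t)) = (\<Sum>y<p. (zeta p ^ t) ^ y) - 1"
  proof -
    have "{..<p} = insert 0 {1..<p}" using p_gt1 by auto
    hence "(\<Sum>y<p. (zeta p ^ t) ^ y) = 1 + (\<Sum>y\<in>{1..<p}. (zeta p ^ t) ^ y)" by simp
    thus ?thesis by (simp add: power_mult[symmetric] mult.commute)
  qed
  show ?thesis
  proof (cases "p dvd t")
    case True
    hence "zeta p ^ t = 1" using zeta_pow_eq1 by simp
    thus ?thesis using s True by simp
  next
    case False
    hence ne: "zeta p ^ t \<noteq> 1" using zeta_pow_eq1 by simp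
    have "(zeta p ^ t) ^ p = 1" by (metis power_mult mult.commute zeta_pow_p power_one)
    hence "(\<Sum>y<p. (zeta p ^ t) ^ y) = 0" using ne by (simp add: sum_gp_strict)
    thus ?thesis using s False by simp
  qed
qed

definition Sf :: "'a \<Rightarrow> 'a \<Rightarrow> complex" where
  "Sf a b = (\<Sum>x\<in>UNIV. psi (a * x ^ 2 + b * x ^ (p ^ k + 1)))"

lemma Dsum_Sf: "Dsum p m k u v = (\<Sum>y\<in>{1..<p}. Sf (of_nat y * u) (of_nat y * v))"
  unfolding Dsum_def Sf_def
  by (intro sum.cong refl) (simp add: psi_scal algebra_simps)

lemma Dsum_int: "Dsum p m k u v =
   of_int (\<Sum>x\<in>UNIV. if trace_nat p m (u * x ^ 2 + v * x ^ (p ^ k + 1)) = 0 then int p - 1 else - 1)"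
proof -
  have "Dsum p m k u v = (\<Sum>x\<in>UNIV. \<Sum>y\<in>{1..<p}. zeta p ^ (y * trace_nat p m (u * x ^ 2 + v * x ^ (p ^ k + 1))))"
    unfolding Dsum_def by (rule sum.swap)
  also have "\<dots> = (\<Sum>x\<in>UNIV. of_int (if trace_nat p m (u * x ^ 2 + v * x ^ (p ^ k + 1)) = 0 then int p - 1 else - 1))"
  proof (intro sum.cong refl)
    fix x
    let ?t = "trace_nat p m (u * x ^ 2 + v * x ^ (p ^ k + 1))"
    have "p dvd ?t \<longleftrightarrow> ?t = 0" using tn_lt by (rule dvd_lt)
    thus "(\<Sum>y\<in>{1..<p}. zeta p ^ (y * ?t)) = of_int (if ?t = 0 then int p - 1 else - 1)"
      by (subst geo) simp
  qed
  finally show ?thesis by simp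
qed

end


context ffs begin

definition sig :: "'a \<Rightarrow> 'a" where "sig z = z ^ (p ^ k)"
definition tau :: "'a \<Rightarrow> 'a" where "tau z = z ^ (p ^ (m * k - k))"

lemma pk_pos: "p ^ j > 0" using p_gt1 by simp

lemma sig_add: "sig (x + y) = sig x + sig y" by (simp add: sig_def frob)
lemma sig_mult: "sig (x * y) = sig x * sig y" by (simp add: sig_def power_mult_distrib)
lemma sig_neg: "sig (- x) = - sig x" by (simp add: sig_def frob_neg)
lemma sig_diff: "sig (x - y) = sig x - sig y" by (simp add: sig_def frob_diff)
lemma sig_div: "sig (x / y) = sig x / sig y" by (simp add: sig_def power_divide)
lemma sig_0: "sig 0 = 0" using pk_pos[of k] by (simp add: sig_def)
lemma sig_Fp: "c \<in> Fp \<Longrightarrow> sig c = c" by (simp add: sig_def Fp_iter)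
lemma tau_add: "tau (x + y) = tau x + tau y" by (simp add: tau_def frob)
lemma tau_mult: "tau (x * y) = tau x * tau y" by (simp add: tau_def power_mult_distrib)
lemma tau_Fp: "c \<in> Fp \<Longrightarrow> tau c = c" by (simp add: tau_def Fp_iter)

lemma pk_mul: "p ^ k * p ^ (m * k - k) = p ^ (m * k)"
proof -
  have "k \<le> m * k" using m_ge by simp
  hence "k + (m * k - k) = m * k" by simp
  thus ?thesis by (metis power_add)
qed

lemma tau_sig: "tau (sig z) = z"
proof -
  have "tau (sig z) = z ^ (p ^ k * p ^ (m * k - k))" by (simp add: tau_def sig_def power_mult)
  thus ?thesis using pk_mul fermat_mult by (simp add: mult.commute)
qed

lemma sig_tau: "sig (tau z) = z"
proof -
  have "sig (tau z) = z ^ (p ^ (m * k - k) * p ^ k)" by (simp add: tau_def sig_def power_mult)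
  thus ?thesis using pk_mul fermat_mult by (simp add: mult.commute)
qed

lemma sig_eq0: "sig z = 0 \<longleftrightarrow> z = 0" using pk_pos[of k] by (simp add: sig_def)

lemma tr_sig: "ftrace p m (sig z) = ftrace p m z" by (simp add: sig_def tr_pow_iter)
lemma tr_tau: "ftrace p m (tau z) = ftrace p m z" by (simp add: tau_def tr_pow_iter)

lemma tr_swap: "ftrace p m (a * sig b) = ftrace p m (tau a * b)"
proof -
  have "ftrace p m (a * sig b) = ftrace p m (tau (a * sig b))" by (simp add: tr_tau)
  also have "tau (a * sig b) = tau a * b" by (simp add: tau_mult tau_sig)
  finally show ?thesis .
qed

lemma sig_iter: "sig c = c \<Longrightarrow> c ^ (p ^ (k * x)) = c"
proof (induction x)
  case (Suc x)
  have e: "p ^ (k * Suc x) = p ^ (k * x) * p ^ k" by (simp add: power_add)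
  have "c ^ (p ^ (k * Suc x)) = (c ^ (p ^ (k * x))) ^ (p ^ k)" unfolding e by (rule power_mult)
  thus ?case using Suc by (simp add: sig_def)
qed simp

lemma sig_fixed: "sig c = c \<Longrightarrow> c \<in> Fp"
proof -
  assume h: "sig c = c"
  have "k \<noteq> 0" using k_ge by simp
  then obtain x y where xy: "k * x = m * y + gcd k m" using bezout_nat by blast
  have "gcd k m = 1" using cop by (simp add: coprime_iff_gcd_eq_1 gcd.commute)
  hence e: "p ^ (k * x) = p ^ (m * y) * p" using xy by simp
  have "c = c ^ (p ^ (k * x))" using sig_iter[OF h] by simp
  also have "\<dots> = (c ^ (p ^ (m * y))) ^ p" unfolding e by (rule power_mult)
  also have "\<dots> = c ^ p" using fermat_mult by simp
  finally show ?thesis by (simp add: Fp_def)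
qed

definition Qf :: "'a \<Rightarrow> 'a \<Rightarrow> 'a \<Rightarrow> 'a" where "Qf a b x = a * x ^ 2 + b * (sig x * x)"

lemma Sf_Q: "Sf a b = (\<Sum>x\<in>UNIV. psi (Qf a b x))"
  unfolding Sf_def Qf_def by (simp add: sig_def power_add mult_ac)

definition Lf :: "'a \<Rightarrow> 'a \<Rightarrow> 'a \<Rightarrow> 'a" where "Lf a b z = 2 * a * z + b * sig z + tau (b * z)"

definition Rr :: "'a \<Rightarrow> 'a \<Rightarrow> 'a set" where "Rr a b = {z. Lf a b z = 0}"

lemma Q_cross: "Qf a b (w + z) = Qf a b w + Qf a b z + (2*a*w*z + b*(sig w * z) + b * (sig z * w))"
  by (simp add: Qf_def sig_add algebra_simps power2_eq_square)

lemma tr_cross: "ftrace p m (2*a*w*z + b*(sig w * z) + b * (sig z * w)) = ftrace p m (w * Lf a b z)"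
proof -
  have "ftrace p m (b*(sig w * z)) = ftrace p m (tau (b * z) * w)"
    using tr_swap[of "b*z" w] by (simp add: mult_ac)
  moreover have "w * Lf a b z = 2*a*w*z + b * (sig z * w) + tau (b * z) * w"
    by (simp add: Lf_def algebra_simps)
  ultimately show ?thesis by (simp add: tr_add)
qed

lemma two_nz: "(2::'a) \<noteq> 0"
proof -
  have "\<not> p dvd 2" using p_ge3 by (auto dest: dvd_imp_le)
  hence "(of_nat 2 :: 'a) \<noteq> 0" using ofnat_eq0[of 2] by blast
  thus ?thesis by simp
qed

lemma two_Fp: "(2::'a) \<in> Fp" using Fp_ofnat[of 2] by simp

lemma tr_Q_rad: "Lf a b z = 0 \<Longrightarrow> ftrace p m (Qf a b z) = 0"
proof -
  assume h: "Lf a b z = 0"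
  have sw: "ftrace p m (z * tau (b * z)) = ftrace p m (b * (sig z * z))"
    using tr_swap[of "b*z" z] by (simp add: mult_ac)
  have e: "z * Lf a b z = 2 * (a * z ^ 2) + b * (sig z * z) + z * tau (b * z)"
    by (simp add: Lf_def algebra_simps power2_eq_square)
  have "ftrace p m (z * Lf a b z) = 2 * ftrace p m (a * z ^ 2) + ftrace p m (b * (sig z * z)) + ftrace p m (b * (sig z * z))"
    unfolding e tr_add tr_scal[OF two_Fp] sw ..
  also have "\<dots> = 2 * ftrace p m (Qf a b z)" by (simp add: Qf_def tr_add algebra_simps)
  finally have "2 * ftrace p m (Qf a b z) = 0" using h tr_zero by simp
  thus ?thesis using two_nz by simp
qed

lemma Q_neg: "Qf (-a) (-b) x = - Qf a b x" by (simp add: Qf_def)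

lemma S_norm: "Sf a b * Sf (-a) (-b) = of_nat (p ^ m) * of_nat (card (Rr a b))"
proof -
  have "Sf a b * Sf (-a) (-b) = (\<Sum>x\<in>UNIV. \<Sum>w\<in>UNIV. psi (Qf a b x - Qf a b w))"
    by (simp add: Sf_Q Q_neg sum_product psi_add[symmetric])
  also have "\<dots> = (\<Sum>w\<in>UNIV. \<Sum>x\<in>UNIV. psi (Qf a b x - Qf a b w))" by (rule sum.swap)
  also have "\<dots> = (\<Sum>w\<in>UNIV. \<Sum>z\<in>UNIV. psi (Qf a b (w + z) - Qf a b w))"
  proof (rule sum.cong[OF refl])
    fix w
    show "(\<Sum>x\<in>UNIV. psi (Qf a b x - Qf a b w)) = (\<Sum>z\<in>UNIV. psi (Qf a b (w + z) - Qf a b w))"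
      by (rule sum.reindex_bij_witness[of _ "\<lambda>z. w + z" "\<lambda>x. x - w"]) auto
  qed
  also have "\<dots> = (\<Sum>w\<in>UNIV. \<Sum>z\<in>UNIV. psi (Qf a b z) * psi (Lf a b z * w))"
  proof (rule sum.cong[OF refl], rule sum.cong[OF refl])
    fix w z
    have "Qf a b (w + z) - Qf a b w = Qf a b z + (2*a*w*z + b*(sig w * z) + b * (sig z * w))"
      by (simp add: Q_cross)
    hence "psi (Qf a b (w + z) - Qf a b w) = psi (Qf a b z) * psi (2*a*w*z + b*(sig w * z) + b * (sig z * w))"
      by (simp add: psi_add)
    also have "psi (2*a*w*z + b*(sig w * z) + b * (sig z * w)) = psi (w * Lf a b z)"
      by (rule psi_tr) (rule tr_cross)
    also have "w * Lf a b z = Lf a b z * w" by (rule mult.commute)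
    finally show "psi (Qf a b (w + z) - Qf a b w) = psi (Qf a b z) * psi (Lf a b z * w)" .
  qed
  also have "\<dots> = (\<Sum>z\<in>UNIV. psi (Qf a b z) * (\<Sum>w\<in>UNIV. psi (Lf a b z * w)))"
    by (subst sum.swap) (simp add: sum_distrib_left)
  also have "\<dots> = (\<Sum>z\<in>UNIV. if z \<in> Rr a b then of_nat (p ^ m) else 0)"
  proof (rule sum.cong[OF refl])
    fix z
    show "psi (Qf a b z) * (\<Sum>w\<in>UNIV. psi (Lf a b z * w)) = (if z \<in> Rr a b then of_nat (p ^ m) else 0)"
      using tr_Q_rad[of a b z] psi_eq1 by (simp add: char_sum Rr_def)
  qed
  also have "\<dots> = (\<Sum>z\<in>Rr a b. of_nat (p ^ m))"
    by (simp add: sum.inter_restrict[symmetric])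
  finally show ?thesis by simp
qed

end


context ffs begin

lemma L_add: "Lf a b (x + y) = Lf a b x + Lf a b y"
  by (simp add: Lf_def sig_add tau_add algebra_simps)

lemma L_scal: "c \<in> Fp \<Longrightarrow> Lf a b (c * x) = c * Lf a b x"
  by (simp add: Lf_def sig_mult sig_Fp tau_mult tau_Fp algebra_simps)

lemma L_0: "Lf a b 0 = 0"
  using pk_pos[of "m * k - k"] p_gt1 by (simp add: Lf_def sig_0 tau_def power_0_left)

lemma R_0: "0 \<in> Rr a b" by (simp add: Rr_def L_0)
lemma R_add: "x \<in> Rr a b \<Longrightarrow> y \<in> Rr a b \<Longrightarrow> x + y \<in> Rr a b" by (simp add: Rr_def L_add)
lemma R_scal: "c \<in> Fp \<Longrightarrow> x \<in> Rr a b \<Longrightarrow> c * x \<in> Rr a b" by (simp add: Rr_def L_scal)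

lemma R_rec:
  assumes "b \<noteq> 0" "z \<in> Rr a b"
  shows "sig (sig z) = - (sig (2*a) * sig z + b * z) / sig b"
proof -
  have "sig (Lf a b z) = 0" using assms by (simp add: Rr_def sig_0)
  hence "sig (2*a) * sig z + sig b * sig (sig z) + b * z = 0"
    by (simp add: Lf_def sig_add sig_mult sig_tau mult.assoc)
  moreover have "sig b \<noteq> 0" using assms sig_eq0 by simp
  ultimately show ?thesis by (simp add: field_simps) (metis add.commute add_eq_0_iff2 mult.commute add.assoc)
qed

definition W :: "'a \<Rightarrow> 'a \<Rightarrow> 'a" where "W x y = x * sig y - y * sig x"

lemma W_sig:
  assumes "b \<noteq> 0" "x \<in> Rr a b" "y \<in> Rr a b"
  shows "sig (W x y) = (b / sig b) * W x y"
proof -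
  have sb: "sig b \<noteq> 0" using assms sig_eq0 by simp
  have "sig (W x y) = sig x * sig (sig y) - sig y * sig (sig x)"
    by (simp add: W_def sig_diff sig_mult)
  also have "\<dots> = (b / sig b) * W x y"
    unfolding R_rec[OF assms(1,2)] R_rec[OF assms(1,3)] W_def using sb
    by (simp add: field_simps)
  finally show ?thesis .
qed

lemma W_zero:
  assumes "z1 \<noteq> 0" "W z1 z2 = 0"
  shows "z2 / z1 \<in> Fp"
proof -
  have s1: "sig z1 \<noteq> 0" using assms sig_eq0 by simp
  have "z1 * sig z2 = z2 * sig z1" using assms by (simp add: W_def)
  hence "sig (z2 / z1) = z2 / z1" using s1 assms(1)
    by (simp add: sig_div field_simps)
  thus ?thesis by (rule sig_fixed)
qed

lemma W_Fp: "e \<in> Fp \<Longrightarrow> W z (e * z) = 0"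
  by (simp add: W_def sig_mult sig_Fp)

lemma span3:
  assumes "b \<noteq> 0" "z1 \<in> Rr a b" "z2 \<in> Rr a b" "z3 \<in> Rr a b" "W z1 z2 \<noteq> 0"
  shows "\<exists>c\<in>Fp. \<exists>d\<in>Fp. z3 = c * z1 + d * z2"
proof -
  have sb: "sig b \<noteq> 0" using assms sig_eq0 by simp
  have f: "b / sig b \<noteq> 0" using sb assms(1) by simp
  define c where "c = W z3 z2 / W z1 z2"
  define d where "d = W z1 z3 / W z1 z2"
  have "sig c = c" unfolding c_def sig_div W_sig[OF assms(1,4,3)] W_sig[OF assms(1,2,3)]
    using f by simp
  hence cF: "c \<in> Fp" by (rule sig_fixed)
  have "sig d = d" unfolding d_def sig_div W_sig[OF assms(1,2,4)] W_sig[OF assms(1,2,3)]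
    using f by simp
  hence dF: "d \<in> Fp" by (rule sig_fixed)
  have "W z1 z2 * z3 = W z3 z2 * z1 + W z1 z3 * z2" by (simp add: W_def algebra_simps)
  hence "z3 = c * z1 + d * z2" using assms(5) unfolding c_def d_def by (simp add: field_simps)
  thus ?thesis using cF dF by blast
qed

lemma R_card:
  assumes "b \<noteq> 0"
  shows "card (Rr a b) = 1 \<or> card (Rr a b) = p \<or> card (Rr a b) = p ^ 2"
proof (cases "Rr a b = {0}")
  case True thus ?thesis by simp
next
  case False
  then obtain z1 where z1: "z1 \<in> Rr a b" "z1 \<noteq> 0" using R_0 by blast
  show ?thesis
  proof (cases "\<forall>z\<in>Rr a b. W z1 z = 0")
    case True
    have "Rr a b = (\<lambda>c. c * z1) ` Fp"
    proof
      show "Rr a b \<subseteq> (\<lambda>c. c * z1) ` Fp"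
      proof
        fix z assume "z \<in> Rr a b"
        hence "W z1 z = 0" using True by blast
        hence "z / z1 \<in> Fp" by (rule W_zero[OF z1(2)])
        moreover have "z = (z / z1) * z1" using z1 by simp
        ultimately show "z \<in> (\<lambda>c. c * z1) ` Fp" by blast
      qed
      show "(\<lambda>c. c * z1) ` Fp \<subseteq> Rr a b" using R_scal[OF _ z1(1)] by (simp add: image_subset_iff)
    qed
    moreover have "inj_on (\<lambda>c. c * z1) Fp" using z1 by (auto simp: inj_on_def)
    ultimately have "card (Rr a b) = card Fp" by (simp add: card_image)
    hence "card (Rr a b) = p" using card_Fp by simp
    thus ?thesis by simp
  next
    case False
    then obtain z2 where z2: "z2 \<in> Rr a b" "W z1 z2 \<noteq> 0" by blast
    have "Rr a b = (\<lambda>(c, d). c * z1 + d * z2) ` (Fp \<times> Fp)"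
    proof
      show "Rr a b \<subseteq> (\<lambda>(c, d). c * z1 + d * z2) ` (Fp \<times> Fp)"
      proof
        fix z assume "z \<in> Rr a b"
        then obtain c d where "c \<in> Fp" "d \<in> Fp" "z = c * z1 + d * z2"
          using span3[OF assms z1(1) z2(1) _ z2(2)] by blast
        thus "z \<in> (\<lambda>(c, d). c * z1 + d * z2) ` (Fp \<times> Fp)"
          by (intro image_eqI[of _ _ "(c, d)"]) simp_all
      qed
      show "(\<lambda>(c, d). c * z1 + d * z2) ` (Fp \<times> Fp) \<subseteq> Rr a b"
      proof clarify
        fix c d assume "c \<in> Fp" "d \<in> Fp"
        hence "c * z1 \<in> Rr a b" "d * z2 \<in> Rr a b" using R_scal z1(1) z2(1) by blast+
        thus "c * z1 + d * z2 \<in> Rr a b" by (rule R_add)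
      qed
    qed
    moreover have "inj_on (\<lambda>(c, d). c * z1 + d * z2) (Fp \<times> Fp)"
    proof (rule inj_onI, clarify)
      fix c d c' d'
      assume F: "c \<in> Fp" "d \<in> Fp" "c' \<in> Fp" "d' \<in> Fp" and eq: "c * z1 + d * z2 = c' * z1 + d' * z2"
      show "c = c' \<and> d = d'"
      proof (cases "d = d'")
        case True
        thus ?thesis using eq z1 by simp
      next
        case False
        hence dd: "d - d' \<noteq> 0" by simp
        have "(d - d') * z2 = (c' - c) * z1" using eq by (simp add: algebra_simps)
        hence z2e: "z2 = ((c' - c) / (d - d')) * z1" using dd by (simp add: field_simps)
        have "c' - c \<in> Fp" unfolding diff_conv_add_uminus by (intro Fp_add Fp_neg F)
        moreover have "d - d' \<in> Fp" unfolding diff_conv_add_uminus by (intro Fp_add Fp_neg F)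
        ultimately have "(c' - c) / (d - d') \<in> Fp" by (rule Fp_div)
        hence "W z1 z2 = 0" unfolding z2e by (rule W_Fp)
        thus ?thesis using z2 by simp
      qed
    qed
    ultimately have "card (Rr a b) = card (Fp \<times> Fp)" by (simp add: card_image)
    hence "card (Rr a b) = p ^ 2" by (simp add: card_cartesian_product card_Fp power2_eq_square)
    thus ?thesis by simp
  qed
qed

lemma R_scale: "c \<in> Fp \<Longrightarrow> c \<noteq> 0 \<Longrightarrow> Rr (c * a) (c * b) = Rr a b"
proof -
  assume c: "c \<in> Fp" "c \<noteq> 0"
  have "Lf (c * a) (c * b) z = c * Lf a b z" for z
    using c by (simp add: Lf_def tau_mult tau_Fp algebra_simps)
  thus ?thesis using c by (simp add: Rr_def)
qed

lemma Sf_scale: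
  assumes "c \<in> Fp" "c \<noteq> 0"
  shows "Sf (c^2 * a) (c^2 * b) = Sf a b"
proof -
  have "Qf (c^2 * a) (c^2 * b) x = Qf a b (c * x)" for x
    using assms by (simp add: Qf_def sig_mult sig_Fp power2_eq_square algebra_simps)
  hence "Sf (c^2 * a) (c^2 * b) = (\<Sum>x\<in>UNIV. psi (Qf a b (c * x)))" by (simp add: Sf_Q)
  also have "\<dots> = (\<Sum>x\<in>UNIV. psi (Qf a b x))"
    by (rule sum.reindex_bij_witness[of _ "\<lambda>y. y / c" "\<lambda>y. c * y"]) (use assms in auto)
  finally show ?thesis by (simp add: Sf_Q)
qed

lemma Sf_rot:
  assumes "e \<in> Fp" "f \<in> Fp" "e^2 + f^2 \<noteq> 0"
  shows "Sf a b ^ 2 = Sf ((e^2 + f^2) * a) ((e^2 + f^2) * b) ^ 2"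
proof -
  define t where "t = e^2 + f^2"
  have t0: "t \<noteq> 0" using assms t_def by simp
  have sq: "Sf a' b' ^ 2 = (\<Sum>(x, w)\<in>UNIV \<times> UNIV. psi (Qf a' b' x + Qf a' b' w))" for a' b'
    by (simp add: power2_eq_square Sf_Q sum_product psi_add sum.cartesian_product)
  have key: "Qf a b (e * x + f * w) + Qf a b (- f * x + e * w) = Qf (t * a) (t * b) x + Qf (t * a) (t * b) w" for x w
  proof -
    have s1: "sig (e * x + f * w) = e * sig x + f * sig w" using assms by (simp add: sig_add sig_mult sig_Fp)
    have s2: "sig (- f * x + e * w) = - f * sig x + e * sig w"
      using assms sig_add[of "- f * x" "e * w"] by (simp add: sig_mult sig_Fp sig_neg)
    show ?thesis unfolding Qf_def s1 s2 by (simp add: t_def power2_eq_square algebra_simps)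
  qed
  define Phi where "Phi = (\<lambda>(x::'a, w::'a). (e * x + f * w, - f * x + e * w))"
  define Psi where "Psi = (\<lambda>(x::'a, w::'a). ((e * x - f * w) / t, (f * x + e * w) / t))"
  have c1: "e * ((e * x - f * w) / t) + f * ((f * x + e * w) / t) = x" for x w
  proof -
    have h: "e * (e * x - f * w) + f * (f * x + e * w) = t * x" by (simp add: t_def algebra_simps power2_eq_square)
    have "e * ((e * x - f * w) / t) + f * ((f * x + e * w) / t) = (e * (e * x - f * w) + f * (f * x + e * w)) / t"
      using t0 by (simp add: field_simps)
    thus ?thesis unfolding h using t0 by simp
  qed
  have c2: "- f * ((e * x - f * w) / t) + e * ((f * x + e * w) / t) = w" for x w
  proof -
    have h: "- f * (e * x - f * w) + e * (f * x + e * w) = t * w" by (simp add: t_def algebra_simps power2_eq_square)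
    have "- f * ((e * x - f * w) / t) + e * ((f * x + e * w) / t) = (- f * (e * x - f * w) + e * (f * x + e * w)) / t"
      using t0 by (simp add: field_simps)
    thus ?thesis unfolding h using t0 by simp
  qed
  have c3: "(e * (e * x + f * w) - f * (- f * x + e * w)) / t = x" for x w
  proof -
    have h: "e * (e * x + f * w) - f * (- f * x + e * w) = t * x" by (simp add: t_def algebra_simps power2_eq_square)
    show ?thesis unfolding h using t0 by simp
  qed
  have c4: "(f * (e * x + f * w) + e * (- f * x + e * w)) / t = w" for x w
  proof -
    have h: "f * (e * x + f * w) + e * (- f * x + e * w) = t * w" by (simp add: t_def algebra_simps power2_eq_square)
    show ?thesis unfolding h using t0 by simp
  qed
  have PP: "Phi (Psi z) = z" for z
    by (cases z) (simp only: Phi_def Psi_def case_prod_conv c1 c2)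
  have PP2: "Psi (Phi z) = z" for z
    by (cases z) (simp only: Phi_def Psi_def case_prod_conv c3 c4)
  define G where "G = (\<lambda>(x, w). psi (Qf a b x + Qf a b w))"
  have "(\<Sum>(x, w)\<in>UNIV \<times> UNIV. psi (Qf a b x + Qf a b w)) = (\<Sum>z\<in>UNIV. G z)"
    by (simp add: G_def)
  also have "\<dots> = (\<Sum>z\<in>UNIV. G (Phi z))"
    by (rule sum.reindex_bij_witness[of _ Phi Psi]) (simp_all add: PP PP2)
  also have "\<dots> = (\<Sum>(x, w)\<in>UNIV \<times> UNIV. psi (Qf a b (e * x + f * w) + Qf a b (- f * x + e * w)))"
    by (simp add: G_def Phi_def case_prod_beta)
  also have "\<dots> = (\<Sum>(x, w)\<in>UNIV \<times> UNIV. psi (Qf (t * a) (t * b) x + Qf (t * a) (t * b) w))"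
    by (simp only: key)
  finally show ?thesis by (simp add: sq t_def)
qed

end


lemma mult_parity:
  fixes Z :: int and p :: nat
  assumes "prime p" "Z ^ 2 = (int p - 1) ^ 2 * int p ^ j" "odd j"
  shows False
proof -
  have pe: "prime_elem (int p)" using assms(1) by simp
  have p1: "int p > 1" using assms(1) prime_gt_1_nat by fastforce
  have nz: "(int p - 1) ^ 2 * int p ^ j \<noteq> 0" using p1 by simp
  hence Z0: "Z \<noteq> 0" using assms(2) by auto
  have nd: "\<not> int p dvd (int p - 1)"
  proof
    assume h: "int p dvd int p - 1"
    have "int p dvd int p - (int p - 1)" by (rule dvd_diff[OF dvd_refl h])
    hence "int p dvd 1" by simp
    hence "int p \<le> 1" by (rule zdvd_imp_le) simp
    thus False using p1 by simp
  qed
  have "multiplicity (int p) (Z ^ 2) = 2 * multiplicity (int p) Z"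
    using prime_elem_multiplicity_power_distrib[OF pe Z0] by blast
  moreover have "multiplicity (int p) ((int p - 1) ^ 2 * int p ^ j) = j"
  proof -
    have a: "(int p - 1) ^ 2 \<noteq> 0" "int p ^ j \<noteq> 0" using p1 by auto
    have "multiplicity (int p) ((int p - 1) ^ 2 * int p ^ j)
        = multiplicity (int p) ((int p - 1) ^ 2) + multiplicity (int p) (int p ^ j)"
      by (rule prime_elem_multiplicity_mult_distrib[OF pe a])
    moreover have "multiplicity (int p) ((int p - 1) ^ 2) = 2 * multiplicity (int p) (int p - 1)"
      using prime_elem_multiplicity_power_distrib[OF pe, of "int p - 1" 2] p1 by simp
    moreover have "multiplicity (int p) (int p - 1) = 0" by (rule not_dvd_imp_multiplicity_0[OF nd])
    moreover have "multiplicity (int p) (int p ^ j) = j" by (rule multiplicity_prime_power[OF pe])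
    ultimately show ?thesis by simp
  qed
  ultimately have "2 * multiplicity (int p) Z = j" using assms(2) by simp
  hence "even j" by (metis dvd_triv_left)
  thus False using assms(3) by simp
qed

context ffs begin

definition G :: "'a set" where "G = Fp - {0}"
definition Sq :: "'a set" where "Sq = (\<lambda>c. c ^ 2) ` G"

lemma card_G: "card G = p - 1"
  using card_Fp Fp_0 by (simp add: G_def)

lemma G_mult: "a \<in> G \<Longrightarrow> b \<in> G \<Longrightarrow> a * b \<in> G" by (simp add: G_def Fp_mult)
lemma G_div: "a \<in> G \<Longrightarrow> b \<in> G \<Longrightarrow> a / b \<in> G" by (simp add: G_def Fp_div)
lemma G_neg: "a \<in> G \<Longrightarrow> - a \<in> G" by (simp add: G_def Fp_neg)
lemma G_sq: "a \<in> G \<Longrightarrow> a ^ 2 \<in> G" by (simp add: G_mult power2_eq_square)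
lemma Sq_sub: "Sq \<subseteq> G" using G_sq by (auto simp: Sq_def)

lemma neg_ne: "c \<noteq> 0 \<Longrightarrow> c \<noteq> - (c::'a)"
proof
  assume "c \<noteq> 0" "c = - c"
  hence "2 * c = 0" by (metis add_eq_0_iff2 mult_2)
  thus False using two_nz \<open>c \<noteq> 0\<close> by simp
qed

lemma card_Sq: "2 * card Sq = p - 1"
proof -
  define A where "A = (\<lambda>s. {c \<in> G. c ^ 2 = s})"
  have U: "G = \<Union>(A ` Sq)" by (auto simp: A_def Sq_def)
  have "card G = (\<Sum>s\<in>Sq. card (A s))"
    unfolding U by (rule card_UN_disjoint) (auto simp: A_def)
  also have "\<dots> = (\<Sum>s\<in>Sq. 2)"
  proof (rule sum.cong[OF refl])
    fix s assume "s \<in> Sq"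
    then obtain c where c: "c \<in> G" "s = c ^ 2" by (auto simp: Sq_def)
    have "A s = {c, - c}" using c G_neg by (auto simp: A_def power2_eq_iff)
    moreover have "c \<noteq> - c" by (rule neg_ne) (use c in \<open>simp add: G_def\<close>)
    ultimately show "card (A s) = 2" by simp
  qed
  finally show ?thesis using card_G by simp
qed

lemma exists_nonsq: "\<exists>n. n \<in> G \<and> n \<notin> Sq"
proof (rule ccontr)
  assume "\<not> ?thesis"
  hence "G \<subseteq> Sq" by blast
  hence "card G \<le> card Sq" by (intro card_mono) simp_all
  thus False using card_Sq card_G p_ge3 by simp
qed

definition nsq :: 'a where "nsq = (SOME n. n \<in> G \<and> n \<notin> Sq)"

lemma nsq: "nsq \<in> G" "nsq \<notin> Sq"
  using someI_ex[OF exists_nonsq] by (simp_all add: nsq_def)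

lemma NSq:
  assumes "y \<in> G" "y \<notin> Sq"
  shows "\<exists>c\<in>G. y = nsq * c ^ 2"
proof -
  have inj: "inj_on (\<lambda>s. nsq * s) Sq" using nsq by (auto simp: inj_on_def G_def)
  have sub: "(\<lambda>s. nsq * s) ` Sq \<subseteq> G - Sq"
  proof clarify
    fix s assume "s \<in> Sq"
    then obtain c where c: "c \<in> G" "s = c ^ 2" by (auto simp: Sq_def)
    show "nsq * s \<in> G - Sq"
    proof
      show "nsq * s \<in> G" using c nsq G_mult G_sq by simp
      show "nsq * s \<notin> Sq"
      proof
        assume "nsq * s \<in> Sq"
        then obtain d where d: "d \<in> G" "nsq * s = d ^ 2" by (auto simp: Sq_def)
        have "c \<noteq> 0" using c by (simp add: G_def)
        hence "nsq = (d / c) ^ 2" using d c by (simp add: field_simps power2_eq_square)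
        moreover have "d / c \<in> G" using c d G_div by simp
        ultimately show False using nsq by (auto simp: Sq_def)
      qed
    qed
  qed
  have "card ((\<lambda>s. nsq * s) ` Sq) = card Sq" using card_image[OF inj] .
  also have "\<dots> = card (G - Sq)" using card_Sq card_G Sq_sub card_Diff_subset[of Sq G] by simp
  finally have "(\<lambda>s. nsq * s) ` Sq = G - Sq" using sub by (intro card_subset_eq) simp_all
  hence "y \<in> (\<lambda>s. nsq * s) ` Sq" using assms by simp
  thus ?thesis by (auto simp: Sq_def)
qed

lemma nsq_two: "\<exists>e\<in>Fp. \<exists>f\<in>Fp. nsq = e ^ 2 + f ^ 2"
proof -
  define A where "A = (\<lambda>a. a ^ 2) ` Fp"
  define B where "B = (\<lambda>s. nsq - s) ` A"
  have FG: "Fp = insert 0 G" using Fp_0 by (auto simp: G_def)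
  have A: "A = insert 0 Sq" unfolding A_def Sq_def FG by simp
  have "0 \<notin> Sq" using Sq_sub by (auto simp: G_def)
  hence cA: "card A = card Sq + 1" using A by simp
  have "inj_on (\<lambda>s. nsq - s) A" by (auto simp: inj_on_def)
  hence cB: "card B = card A" by (simp add: B_def card_image)
  have sqF: "a ^ 2 \<in> Fp" if "a \<in> Fp" for a using Fp_mult[OF that that] by (simp add: power2_eq_square)
  have AF: "A \<subseteq> Fp" using sqF by (auto simp: A_def)
  have nF: "nsq \<in> Fp" using nsq by (simp add: G_def)
  have BF: "B \<subseteq> Fp"
  proof
    fix z assume "z \<in> B"
    then obtain a where a: "a \<in> A" "z = nsq - a" by (auto simp: B_def)
    have "a \<in> Fp" using a AF by blast
    hence "nsq + - a \<in> Fp" by (intro Fp_add nF Fp_neg)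
    thus "z \<in> Fp" using a by simp
  qed
  have "A \<union> B \<subseteq> Fp" using AF BF by blast
  hence "card (A \<union> B) \<le> p" using card_mono[of Fp "A \<union> B"] card_Fp by simp
  moreover have "card (A \<union> B) + card (A \<inter> B) = card A + card B" using card_Un_Int[of A B] by simp
  ultimately have "card (A \<inter> B) > 0" using cA cB card_Sq by simp
  hence "A \<inter> B \<noteq> {}" by auto
  then obtain z where "z \<in> A" "z \<in> B" by blast
  then obtain e a where e: "e \<in> Fp" "z = e ^ 2" "a \<in> A" "z = nsq - a" by (auto simp: A_def B_def)
  then obtain f where f: "f \<in> Fp" "a = f ^ 2" by (auto simp: A_def)
  have "nsq = e ^ 2 + f ^ 2" using e f by (simp add: algebra_simps)
  thus ?thesis using e f by blast
qed

lemma G_eq: "G = of_nat ` {1..<p}"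
proof
  show "of_nat ` {1..<p} \<subseteq> G"
    using Fp_ofnat by (auto simp: G_def ofnat_eq0 dvd_lt)
  show "G \<subseteq> of_nat ` {1..<p}"
  proof
    fix y assume "y \<in> G"
    then obtain j where "j < p" "y = of_nat j" "y \<noteq> 0" using Fp_eq by (auto simp: G_def)
    moreover have "j \<noteq> 0" using \<open>y = of_nat j\<close> \<open>y \<noteq> 0\<close> by (metis of_nat_0)
    ultimately show "y \<in> of_nat ` {1..<p}" by (intro image_eqI[of _ _ j]) auto
  qed
qed

lemma Dsum_G: "Dsum p m k u v = (\<Sum>y\<in>G. Sf (y * u) (y * v))"
proof -
  have "inj_on (of_nat :: nat \<Rightarrow> 'a) {1..<p}" by (rule inj_on_subset[OF inj_ofnat]) auto
  thus ?thesis unfolding Dsum_Sf G_eq by (simp add: sum.reindex)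
qed

lemma Dsum_vals:
  "Dsum p m k u v = 0 \<or> Dsum p m k u v = of_nat ((p - 1) * p ^ ((m + 1) div 2))
     \<or> Dsum p m k u v = - of_nat ((p - 1) * p ^ ((m + 1) div 2))"
proof -
  define s1 where "s1 = Sf u v"
  define s2 where "s2 = Sf (nsq * u) (nsq * v)"
  define h where "h = card Sq"
  have hS: "Sf (y * u) (y * v) = s1" if "y \<in> Sq" for y
  proof -
    from that obtain c where c: "c \<in> G" "y = c ^ 2" unfolding Sq_def by blast
    thus ?thesis using Sf_scale[of c u v] by (simp add: s1_def G_def)
  qed
  have hN: "Sf (y * u) (y * v) = s2" if yG: "y \<in> G - Sq" for y
  proof -
    obtain c where c: "c \<in> G" "y = nsq * c ^ 2" using yG NSq by blast
    have "Sf (y * u) (y * v) = Sf (c ^ 2 * (nsq * u)) (c ^ 2 * (nsq * v))" using c by (simp add: mult_ac)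
    thus ?thesis using Sf_scale[of c "nsq * u" "nsq * v"] c by (simp add: s2_def G_def)
  qed
  have cN: "card (G - Sq) = h" using card_Sq card_G Sq_sub card_Diff_subset[of Sq G] by (simp add: h_def)
  have D: "Dsum p m k u v = of_nat h * s1 + of_nat h * s2"
  proof -
    have "Dsum p m k u v = (\<Sum>y\<in>Sq. Sf (y * u) (y * v)) + (\<Sum>y\<in>G - Sq. Sf (y * u) (y * v))"
      unfolding Dsum_G using Sq_sub by (simp add: sum.subset_diff add.commute)
    also have "\<dots> = (\<Sum>y\<in>Sq. s1) + (\<Sum>y\<in>G - Sq. s2)" using hS hN by simp
    finally show ?thesis using cN by (simp add: h_def)
  qed
  have h2: "2 * h = p - 1" using card_Sq by (simp add: h_def)
  obtain e f where ef: "e \<in> Fp" "f \<in> Fp" "nsq = e ^ 2 + f ^ 2" using nsq_two by blast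
  have "e ^ 2 + f ^ 2 \<noteq> 0" using nsq ef by (simp add: G_def)
  hence rot: "s1 ^ 2 = s2 ^ 2" using Sf_rot[OF ef(1,2)] ef(3) by (simp add: s1_def s2_def)
  have m1: "- 1 \<in> G" using G_neg[of 1] Fp_1 by (simp add: G_def)
  have sneg: "Sf (- u) (- v) = s1 \<or> Sf (- u) (- v) = s2"
    using hS[of "-1"] hN[of "-1"] m1 by (cases "- 1 \<in> Sq") auto
  have norm: "s1 * Sf (- u) (- v) = of_nat (p ^ m) * of_nat (card (Rr u v))"
    using S_norm by (simp add: s1_def)
  have rc: "card (Rr u v) = 1 \<or> card (Rr u v) = p \<or> card (Rr u v) = p ^ 2" using R_card v_nz by blast
  from rot have "s2 = s1 \<or> s2 = - s1" by (auto simp: power2_eq_iff)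
  thus ?thesis
  proof
    assume "s2 = - s1"
    thus ?thesis using D by simp
  next
    assume e: "s2 = s1"
    hence D': "Dsum p m k u v = of_nat (p - 1) * s1" using D h2
      by (simp add: algebra_simps) (metis mult_2 of_nat_add of_nat_mult mult.commute distrib_left)
    have "Sf (- u) (- v) = s1" using sneg e by auto
    hence sq: "s1 ^ 2 = of_nat (p ^ m) * of_nat (card (Rr u v))" using norm by (simp add: power2_eq_square)
    obtain Z where Z: "Dsum p m k u v = of_int Z" using Dsum_int by blast
    have "(of_int Z :: complex) ^ 2 = of_nat (p - 1) ^ 2 * (of_nat (p ^ m) * of_nat (card (Rr u v)))"
      using D' Z sq by (simp add: power_mult_distrib)
    also have "\<dots> = of_int ((int p - 1) ^ 2 * (int p ^ m * int (card (Rr u v))))"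
      using p_gt1 by (simp add: of_nat_diff)
    finally have Zi: "Z ^ 2 = (int p - 1) ^ 2 * (int p ^ m * int (card (Rr u v)))"
      by (metis of_int_eq_iff of_int_power)
    have "card (Rr u v) = p"
    proof (rule ccontr)
      assume ne: "card (Rr u v) \<noteq> p"
      hence "card (Rr u v) = 1 \<or> card (Rr u v) = p ^ 2" using rc by blast
      thus False
      proof
        assume "card (Rr u v) = 1"
        hence "Z ^ 2 = (int p - 1) ^ 2 * int p ^ m" using Zi by simp
        thus False using mult_parity[OF p_prime _ m_odd] by blast
      next
        assume "card (Rr u v) = p ^ 2"
        hence "Z ^ 2 = (int p - 1) ^ 2 * int p ^ (m + 2)" using Zi by (simp add: power_add power2_eq_square)
        moreover have "odd (m + 2)" using m_odd by simp
        ultimately show False using mult_parity[OF p_prime] by blast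
      qed
    qed
    hence Z1: "Z ^ 2 = (int p - 1) ^ 2 * int p ^ (m + 1)" using Zi by simp
    have me: "m + 1 = 2 * ((m + 1) div 2)" using m_odd by simp
    have hh: "int p ^ (m + 1) = (int p ^ ((m + 1) div 2)) ^ 2"
      by (subst me) (metis power_mult mult.commute)
    have "Z ^ 2 = ((int p - 1) * int p ^ ((m + 1) div 2)) ^ 2"
      unfolding Z1 hh by (simp add: power_mult_distrib)
    hence "Z = (int p - 1) * int p ^ ((m + 1) div 2) \<or> Z = - ((int p - 1) * int p ^ ((m + 1) div 2))"
      by (simp add: power2_eq_iff)
    moreover have "(of_int ((int p - 1) * int p ^ ((m + 1) div 2)) :: complex) = of_nat ((p - 1) * p ^ ((m + 1) div 2))"
      using p_gt1 by (simp add: of_nat_diff)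
    ultimately show ?thesis using Z by (metis of_int_minus)
  qed
qed

end


context ffs begin

lemma sqrt_Fp:
  assumes h: "c ^ 2 \<in> Fp"
  shows "c \<in> Fp"
proof (cases "c = 0")
  case True thus ?thesis using Fp_0 by simp
next
  case False
  have cp: "c ^ p = c ^ (p - 1) * c"
  proof -
    have "p = Suc (p - 1)" using p_gt1 by simp
    hence "c ^ p = c ^ Suc (p - 1)" by (metis)
    thus ?thesis by (simp add: power_Suc2)
  qed
  have "(c ^ 2) ^ p = c ^ 2" using h by (simp add: Fp_def)
  hence "(c ^ (p - 1)) ^ 2 * c ^ 2 = 1 * c ^ 2"
    by (simp add: pow_swap[of c 2 p] cp power_mult_distrib)
  hence "(c ^ (p - 1)) ^ 2 = 1" using False by (metis mult_cancel_right power_not_zero)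
  hence "c ^ (p - 1) = 1 \<or> c ^ (p - 1) = - 1" by (simp add: power2_eq_1_iff)
  thus ?thesis
  proof
    assume "c ^ (p - 1) = 1"
    thus ?thesis using cp by (simp add: Fp_def)
  next
    assume "c ^ (p - 1) = - 1"
    hence cm: "c ^ p = - c" using cp by simp
    have it: "c ^ (p ^ j) = (- 1) ^ j * c" for j
    proof (induction j)
      case (Suc j)
      have "c ^ (p ^ Suc j) = (c ^ (p ^ j)) ^ p" by (simp add: power_mult[symmetric] mult.commute)
      also have "\<dots> = ((- 1) ^ j) ^ p * c ^ p" using Suc by (simp add: power_mult_distrib)
      also have "((- 1 :: 'a) ^ j) ^ p = (- 1) ^ j"
        using p_odd by (simp add: pow_swap[of "- 1" j p] power_minus_odd)
      finally show ?case using cm by simp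
    qed simp
    have "c = (- 1) ^ m * c" using it[of m] fermat by simp
    hence "c = - c" using m_odd by simp
    thus ?thesis using neg_ne False by blast
  qed
qed

lemma zero_lem:
  assumes "y1 \<in> G" "y2 \<in> G" "y1 * x1 ^ 2 + y2 * x2 ^ 2 = 0"
  shows "y1 * x1 ^ (p ^ k + 1) + y2 * x2 ^ (p ^ k + 1) = 0"
proof (cases "x2 = 0")
  case True
  hence "x1 = 0" using assms by (simp add: G_def)
  thus ?thesis using True by simp
next
  case False
  define c where "c = x1 / x2"
  have x1: "x1 = c * x2" using False by (simp add: c_def)
  have "(y1 * c ^ 2 + y2) * x2 ^ 2 = 0" using assms(3) unfolding x1 by (simp add: algebra_simps power_mult_distrib)
  hence e: "y1 * c ^ 2 + y2 = 0" using False by simp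
  have y1: "y1 \<noteq> 0" using assms(1) by (simp add: G_def)
  have "y1 * c ^ 2 = - y2" using e by (simp add: eq_neg_iff_add_eq_0)
  hence "c ^ 2 = - y2 / y1" using y1 by (metis nonzero_mult_div_cancel_left)
  moreover have "- y2 / y1 \<in> G" using assms G_neg G_div by simp
  ultimately have "c ^ 2 \<in> Fp" by (simp add: G_def)
  hence cF: "c \<in> Fp" by (rule sqrt_Fp)
  have cc: "c ^ (p ^ k) = c" using Fp_iter[OF cF] .
  have "x1 ^ (p ^ k + 1) = c ^ 2 * x2 ^ (p ^ k + 1)"
    unfolding x1 by (simp add: power_mult_distrib power_add cc power2_eq_square)
  hence "y1 * x1 ^ (p ^ k + 1) + y2 * x2 ^ (p ^ k + 1) = (y1 * c ^ 2 + y2) * x2 ^ (p ^ k + 1)"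
    by (simp add: algebra_simps)
  thus ?thesis using e by simp
qed

lemma inner_u:
  assumes "y \<noteq> 0"
  shows "(\<Sum>u\<in>UNIV. psi (y * u * x ^ 2 + y * v * x ^ (p ^ k + 1))) = (if x = 0 then of_nat (p ^ m) else 0)"
proof -
  have "(\<Sum>u\<in>UNIV. psi (y * u * x ^ 2 + y * v * x ^ (p ^ k + 1)))
      = (\<Sum>u\<in>UNIV. psi (y * v * x ^ (p ^ k + 1)) * psi ((y * x ^ 2) * u))"
    by (rule sum.cong[OF refl]) (simp add: psi_add[symmetric] algebra_simps)
  also have "\<dots> = psi (y * v * x ^ (p ^ k + 1)) * (\<Sum>u\<in>UNIV. psi ((y * x ^ 2) * u))"
    by (simp add: sum_distrib_left)
  also have "\<dots> = (if x = 0 then of_nat (p ^ m) else 0)"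
    using assms by (simp add: char_sum psi_0)
  finally show ?thesis .
qed

lemma mom1: "(\<Sum>u\<in>UNIV. Dsum p m k u v) = of_nat ((p - 1) * p ^ m)"
proof -
  have "(\<Sum>u\<in>UNIV. Dsum p m k u v)
      = (\<Sum>u\<in>UNIV. \<Sum>y\<in>G. \<Sum>x\<in>UNIV. psi (y * u * x ^ 2 + y * v * x ^ (p ^ k + 1)))"
    by (simp add: Dsum_G Sf_def mult.assoc)
  also have "\<dots> = (\<Sum>y\<in>G. \<Sum>u\<in>UNIV. \<Sum>x\<in>UNIV. psi (y * u * x ^ 2 + y * v * x ^ (p ^ k + 1)))"
    by (rule sum.swap)
  also have "\<dots> = (\<Sum>y\<in>G. \<Sum>x\<in>UNIV. \<Sum>u\<in>UNIV. psi (y * u * x ^ 2 + y * v * x ^ (p ^ k + 1)))"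
    by (rule sum.cong[OF refl]) (rule sum.swap)
  also have "\<dots> = (\<Sum>y\<in>G. \<Sum>x::'a\<in>UNIV. (if x = 0 then of_nat (p ^ m) else 0))"
  proof (rule sum.cong[OF refl])
    fix y assume "y \<in> G"
    hence y0: "y \<noteq> 0" by (simp add: G_def)
    show "(\<Sum>x\<in>UNIV. \<Sum>u\<in>UNIV. psi (y * u * x ^ 2 + y * v * x ^ (p ^ k + 1)))
        = (\<Sum>x::'a\<in>UNIV. (if x = 0 then of_nat (p ^ m) else 0))"
      by (rule sum.cong[OF refl]) (rule inner_u[OF y0])
  qed
  also have "\<dots> = (\<Sum>y\<in>G. of_nat (p ^ m))" by simp
  also have "\<dots> = of_nat ((p - 1) * p ^ m)" using card_G by simp
  finally show ?thesis .
qed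

lemma inner_u2:
  assumes "y1 \<in> G" "y2 \<in> G"
  shows "(\<Sum>u\<in>UNIV. psi (y1 * u * x1 ^ 2 + y1 * v * x1 ^ (p ^ k + 1)) * psi (y2 * u * x2 ^ 2 + y2 * v * x2 ^ (p ^ k + 1)))
        = (if y1 * x1 ^ 2 + y2 * x2 ^ 2 = 0 then of_nat (p ^ m) else 0)"
proof -
  have "(\<Sum>u\<in>UNIV. psi (y1 * u * x1 ^ 2 + y1 * v * x1 ^ (p ^ k + 1)) * psi (y2 * u * x2 ^ 2 + y2 * v * x2 ^ (p ^ k + 1)))
      = (\<Sum>u\<in>UNIV. psi (v * (y1 * x1 ^ (p ^ k + 1) + y2 * x2 ^ (p ^ k + 1))) * psi ((y1 * x1 ^ 2 + y2 * x2 ^ 2) * u))"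
    by (rule sum.cong[OF refl]) (simp add: psi_add[symmetric] algebra_simps)
  also have "\<dots> = psi (v * (y1 * x1 ^ (p ^ k + 1) + y2 * x2 ^ (p ^ k + 1))) * (\<Sum>u\<in>UNIV. psi ((y1 * x1 ^ 2 + y2 * x2 ^ 2) * u))"
    by (simp add: sum_distrib_left)
  also have "\<dots> = (if y1 * x1 ^ 2 + y2 * x2 ^ 2 = 0 then of_nat (p ^ m) else 0)"
    using zero_lem[OF assms, of x1 x2] by (simp add: char_sum psi_0)
  finally show ?thesis .
qed

definition Ix :: "('a \<times> 'a) set" where "Ix = G \<times> UNIV"

definition fa :: "'a \<times> 'a \<Rightarrow> 'a \<Rightarrow> complex" where
  "fa a u = psi (fst a * u * snd a ^ 2 + fst a * v * snd a ^ (p ^ k + 1))"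

lemma Dsum_I: "Dsum p m k u v = (\<Sum>a\<in>Ix. fa a u)"
proof -
  have "Dsum p m k u v = (\<Sum>y\<in>G. \<Sum>x\<in>UNIV. fa (y, x) u)"
    by (simp add: Dsum_G Sf_def fa_def mult.assoc)
  also have "\<dots> = (\<Sum>a\<in>Ix. fa a u)"
    unfolding Ix_def by (subst sum.cartesian_product) (simp add: case_prod_beta)
  finally show ?thesis .
qed

lemma card_Ix: "card Ix = (p - 1) * p ^ m"
  by (simp add: Ix_def card_cartesian_product card_G card_a)

lemma cnt_pairs:
  assumes y1: "y1 \<in> G"
  shows "card {b \<in> Ix. y1 * x1 ^ 2 + fst b * snd b ^ 2 = 0} = p - 1"
proof (cases "x1 = 0")
  case True
  have "{b \<in> Ix. y1 * x1 ^ 2 + fst b * snd b ^ 2 = 0} = G \<times> {0}"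
    using True by (auto simp: Ix_def G_def)
  thus ?thesis by (simp add: card_cartesian_product card_G)
next
  case False
  have y10: "y1 \<noteq> 0" using y1 by (simp add: G_def)
  have eq: "{b \<in> Ix. y1 * x1 ^ 2 + fst b * snd b ^ 2 = 0} = (\<lambda>c. (- y1 * c ^ 2, x1 / c)) ` G"
  proof
    show "(\<lambda>c. (- y1 * c ^ 2, x1 / c)) ` G \<subseteq> {b \<in> Ix. y1 * x1 ^ 2 + fst b * snd b ^ 2 = 0}"
    proof clarify
      fix c assume c: "c \<in> G"
      hence c0: "c \<noteq> 0" by (simp add: G_def)
      have "- y1 * c ^ 2 \<in> G" using c y1 G_neg G_mult G_sq by simp
      moreover have "y1 * x1 ^ 2 + - y1 * c ^ 2 * (x1 / c) ^ 2 = 0"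
        using c0 by (simp add: power_divide)
      ultimately show "(- y1 * c ^ 2, x1 / c) \<in> Ix \<and> y1 * x1 ^ 2 + fst (- y1 * c ^ 2, x1 / c) * snd (- y1 * c ^ 2, x1 / c) ^ 2 = 0"
        by (simp add: Ix_def)
    qed
    show "{b \<in> Ix. y1 * x1 ^ 2 + fst b * snd b ^ 2 = 0} \<subseteq> (\<lambda>c. (- y1 * c ^ 2, x1 / c)) ` G"
    proof clarify
      fix y2 x2 assume "(y2, x2) \<in> Ix" and e: "y1 * x1 ^ 2 + fst (y2, x2) * snd (y2, x2) ^ 2 = 0"
      hence y2: "y2 \<in> G" and e: "y1 * x1 ^ 2 + y2 * x2 ^ 2 = 0" by (auto simp: Ix_def)
      have x20: "x2 \<noteq> 0" using e False y10 by auto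
      define c where "c = x1 / x2"
      have c0: "c \<noteq> 0" using False x20 by (simp add: c_def)
      have x1e: "x1 = c * x2" using x20 by (simp add: c_def)
      have "(y1 * c ^ 2 + y2) * x2 ^ 2 = 0" using e unfolding x1e by (simp add: algebra_simps power_mult_distrib)
      hence e2: "y1 * c ^ 2 + y2 = 0" using x20 by simp
      have "y1 * c ^ 2 = - y2" using e2 by (simp add: eq_neg_iff_add_eq_0)
      hence "c ^ 2 = - y2 / y1" using y10 by (metis nonzero_mult_div_cancel_left)
      moreover have "- y2 / y1 \<in> G" using y1 y2 G_neg G_div by simp
      ultimately have "c ^ 2 \<in> Fp" by (simp add: G_def)
      hence "c \<in> G" using sqrt_Fp c0 by (simp add: G_def)
      moreover have "(y2, x2) = (- y1 * c ^ 2, x1 / c)"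
        using e2 c0 x1e by (auto simp: eq_neg_iff_add_eq_0 add.commute)
      ultimately show "(y2, x2) \<in> (\<lambda>c. (- y1 * c ^ 2, x1 / c)) ` G" by blast
    qed
  qed
  have "inj_on (\<lambda>c. (- y1 * c ^ 2, x1 / c)) G"
  proof (rule inj_onI)
    fix c d assume "c \<in> G" "d \<in> G" "(- y1 * c ^ 2, x1 / c) = (- y1 * d ^ 2, x1 / d)"
    hence "x1 / c = x1 / d" by simp
    thus "c = d" using False by (simp add: divide_cancel_left)
  qed
  thus ?thesis unfolding eq by (simp add: card_image card_G)
qed

lemma mom2: "(\<Sum>u\<in>UNIV. (Dsum p m k u v) ^ 2) = of_nat ((p - 1) ^ 2 * p ^ (2 * m))"
proof -
  define C where "C = (\<lambda>a b. fst a * snd a ^ 2 + fst b * snd b ^ 2 = (0::'a))"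
  have "(\<Sum>u\<in>UNIV. (Dsum p m k u v) ^ 2) = (\<Sum>u\<in>UNIV. \<Sum>a\<in>Ix. \<Sum>b\<in>Ix. fa a u * fa b u)"
    by (simp add: Dsum_I power2_eq_square sum_product)
  also have "\<dots> = (\<Sum>a\<in>Ix. \<Sum>u\<in>UNIV. \<Sum>b\<in>Ix. fa a u * fa b u)" by (rule sum.swap)
  also have "\<dots> = (\<Sum>a\<in>Ix. \<Sum>b\<in>Ix. \<Sum>u\<in>UNIV. fa a u * fa b u)"
    by (rule sum.cong[OF refl]) (rule sum.swap)
  also have "\<dots> = (\<Sum>a\<in>Ix. \<Sum>b\<in>Ix. if C a b then of_nat (p ^ m) else 0)"
  proof (rule sum.cong[OF refl], rule sum.cong[OF refl])
    fix a b assume "a \<in> Ix" "b \<in> Ix"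
    hence "fst a \<in> G" "fst b \<in> G" by (auto simp: Ix_def)
    thus "(\<Sum>u\<in>UNIV. fa a u * fa b u) = (if C a b then of_nat (p ^ m) else 0)"
      unfolding fa_def C_def by (rule inner_u2)
  qed
  also have "\<dots> = (\<Sum>a\<in>Ix. of_nat (card {b \<in> Ix. C a b}) * of_nat (p ^ m))"
    by (rule sum.cong[OF refl]) (simp add: sum.inter_filter[symmetric])
  also have "\<dots> = (\<Sum>a\<in>Ix. of_nat (p - 1) * of_nat (p ^ m))"
  proof (rule sum.cong[OF refl])
    fix a assume "a \<in> Ix"
    hence "fst a \<in> G" by (auto simp: Ix_def)
    hence "card {b \<in> Ix. C a b} = p - 1" unfolding C_def by (rule cnt_pairs)
    thus "(of_nat (card {b \<in> Ix. C a b}) :: complex) * of_nat (p ^ m) = of_nat (p - 1) * of_nat (p ^ m)" by simp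
  qed
  also have "\<dots> = of_nat (card Ix * ((p - 1) * p ^ m))" by simp
  also have "card Ix * ((p - 1) * p ^ m) = (p - 1) ^ 2 * p ^ (2 * m)"
  proof -
    have "p ^ (2 * m) = p ^ m * p ^ m" by (simp add: mult_2 power_add)
    thus ?thesis by (simp add: card_Ix power2_eq_square)
  qed
  finally show ?thesis .
qed

end


context ffs begin

lemma final:
  "(\<forall>u::'a. Dsum p m k u v \<in>
            {0, of_nat ((p - 1) * p ^ ((m + 1) div 2)), - of_nat ((p - 1) * p ^ ((m + 1) div 2))})
       \<and> card {u::'a. Dsum p m k u v = 0} = p ^ m - p ^ (m - 1)
       \<and> card {u::'a. Dsum p m k u v = of_nat ((p - 1) * p ^ ((m + 1) div 2))}
            = (p ^ (m - 1) + p ^ ((m - 1) div 2)) div 2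
       \<and> card {u::'a. Dsum p m k u v = - of_nat ((p - 1) * p ^ ((m + 1) div 2))}
            = (p ^ (m - 1) - p ^ ((m - 1) div 2)) div 2"
proof -
  define h where "h = (m + 1) div 2"
  define g where "g = (m - 1) div 2"
  have hg: "h + g = m" "2 * h = m + 1" "2 * g = m - 1" using m_odd m_ge by (auto simp: h_def g_def)
  define A :: complex where "A = of_nat ((p - 1) * p ^ h)"
  define D where "D = (\<lambda>u. Dsum p m k u v)"
  define Sp where "Sp = {u. D u = A}"
  define Sm where "Sm = {u. D u = - A}"
  define S0 where "S0 = {u. D u = 0}"
  have A0: "A \<noteq> 0" using p_gt1 by (simp add: A_def)
  have AmA: "A \<noteq> - A" using A0 by (metis add.inverse_unique add_eq_0_iff2 mult_2 mult_eq_0_iff zero_neq_numeral)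
  have vals: "D u = 0 \<or> D u = A \<or> D u = - A" for u
    using Dsum_vals[of u] by (simp add: D_def A_def h_def)
  have D1: "D u = A * (of_bool (u \<in> Sp) - of_bool (u \<in> Sm))" for u
    using vals[of u] A0 AmA by (auto simp: Sp_def Sm_def)
  have D2: "(D u) ^ 2 = A ^ 2 * (of_bool (u \<in> Sp) + of_bool (u \<in> Sm))" for u
    using vals[of u] A0 AmA by (auto simp: Sp_def Sm_def power2_eq_square)
  have "(\<Sum>u\<in>UNIV. D u) = A * (of_nat (card Sp) - of_nat (card Sm))"
    unfolding D1 by (simp add: sum_subtractf sum_distrib_left[symmetric])
  hence e1: "A * (of_nat (card Sp) - of_nat (card Sm)) = of_nat ((p - 1) * p ^ m)"
    using mom1 by (simp add: D_def)
  have "(\<Sum>u\<in>UNIV. (D u) ^ 2) = A ^ 2 * (of_nat (card Sp) + of_nat (card Sm))"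
    unfolding D2 by (simp add: sum.distrib sum_distrib_left[symmetric])
  hence e2: "A ^ 2 * (of_nat (card Sp) + of_nat (card Sm)) = of_nat ((p - 1) ^ 2 * p ^ (2 * m))"
    using mom2 by (simp add: D_def)
  have "of_nat ((p - 1) * p ^ m) = A * of_nat (p ^ g)"
    by (simp add: A_def hg(1)[symmetric] power_add)
  hence "A * (of_nat (card Sp) - of_nat (card Sm)) = A * of_nat (p ^ g)" using e1 by simp
  hence "(of_nat (card Sp) :: complex) - of_nat (card Sm) = of_nat (p ^ g)" using A0 by simp
  hence "(of_nat (card Sp) :: complex) = of_nat (card Sm + p ^ g)" by (simp add: algebra_simps)
  hence c1: "card Sp = card Sm + p ^ g" using of_nat_eq_iff by blast
  have mm: "2 * m = 2 * h + 2 * g" using hg m_ge by linarith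
  have "p ^ (2 * m) = p ^ (2 * h) * p ^ (2 * g)" unfolding mm by (rule power_add)
  hence "of_nat ((p - 1) ^ 2 * p ^ (2 * m)) = A ^ 2 * of_nat (p ^ (2 * g))"
    by (simp add: A_def power_mult_distrib power_mult[symmetric] mult_ac)
  hence "A ^ 2 * (of_nat (card Sp) + of_nat (card Sm)) = A ^ 2 * of_nat (p ^ (2 * g))" using e2 by simp
  hence "(of_nat (card Sp) :: complex) + of_nat (card Sm) = of_nat (p ^ (2 * g))" using A0 by simp
  hence "(of_nat (card Sp + card Sm) :: complex) = of_nat (p ^ (2 * g))" by simp
  hence c2: "card Sp + card Sm = p ^ (m - 1)" using hg(3) of_nat_eq_iff by metis
  have part: "UNIV = S0 \<union> Sp \<union> Sm" using vals by (auto simp: S0_def Sp_def Sm_def)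
  have disj: "S0 \<inter> Sp = {}" "(S0 \<union> Sp) \<inter> Sm = {}" using A0 AmA by (auto simp: S0_def Sp_def Sm_def)
  have "card (UNIV :: 'a set) = card S0 + card Sp + card Sm"
    unfolding part by (simp add: card_Un_disjoint disj)
  hence c0: "card S0 = p ^ m - p ^ (m - 1)" using c2 card_a by simp
  have cp: "card Sp = (p ^ (m - 1) + p ^ g) div 2" using c1 c2 by simp
  have cm: "card Sm = (p ^ (m - 1) - p ^ g) div 2" using c1 c2 by simp
  show ?thesis
    using vals c0 cp cm
    by (simp add: D_def S0_def Sp_def Sm_def A_def h_def g_def)
qed

end

theorem lemma3p4:
  fixes p m k :: nat and v :: "'a::{field,finite}"
  assumes "prime p" and "odd p" and "odd m" and "m \<ge> 3" and "k \<ge> 1"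
    and "coprime m k" and "CARD('a) = p ^ m" and "v \<noteq> 0"
  shows "(\<forall>u::'a. Dsum p m k u v \<in>
            {0, of_nat ((p - 1) * p ^ ((m + 1) div 2)), - of_nat ((p - 1) * p ^ ((m + 1) div 2))})
       \<and> card {u::'a. Dsum p m k u v = 0} = p ^ m - p ^ (m - 1)
       \<and> card {u::'a. Dsum p m k u v = of_nat ((p - 1) * p ^ ((m + 1) div 2))}
            = (p ^ (m - 1) + p ^ ((m - 1) div 2)) div 2
       \<and> card {u::'a. Dsum p m k u v = - of_nat ((p - 1) * p ^ ((m + 1) div 2))}
            = (p ^ (m - 1) - p ^ ((m - 1) div 2)) div 2"
proof -
  interpret ffs p m k v using assms by unfold_locales
  show ?thesis by (rule final)
qed


end
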